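(* Let $S=(\mathcal{E},\Sigma,X,\mathcal{O})$ be a d-classical entity, so each $O(e,p)=\{x(e,p)\}$ is a singleton. Then for every $A\subseteq X$: $eig(A)=\{(e,p):x(e,p)\in A\}$, and $eig(X\setminus A)=(\mathcal{E}\times\Sigma)\setminus eig(A)=eig(A)^\perp$. Moreover $\mathcal{Y}_{eig}=\mathcal{Y}_{orth}$.
   Context: An entity $S=(\mathcal{E},\Sigma,X,\mathcal{O})$ consists of sets $\mathcal{E},\Sigma$ and for each $e\in\mathcal{E},p\in\Sigma$ a nonempty set $O(e,p)$, with $X=\bigcup O(e,p)$. It is d-classical iff every $O(e,p)$ is a singleton. The central eigen map is $(e,p)\in eig(A)\iff O(e,p)\subseteq A$; $\mathcal{Y}_{eig}=\{eig(A):A\subseteq X\}$. On $\mathcal{E}\times\Sigma$, $(e,p)\perp(f,q)$ iff $O(e,p)\cap O(f,q)=\emptyset$; for $K\subseteq\mathcal{E}\times\Sigma$, $K^\perp=\{a: a\perp b\text{ for all } b\in K\}$; $\mathcal{Y}_{orth}$ is the set of $K$ with $K=(K^\perp)^\perp$. *)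

theory Defs
  imports Main
begin

definition entity :: "'e set \<Rightarrow> 'p set \<Rightarrow> ('e \<Rightarrow> 'p \<Rightarrow> 'x set) \<Rightarrow> bool" where
  "entity Ent Sig Out \<longleftrightarrow> (\<forall>e\<in>Ent. \<forall>p\<in>Sig. Out e p \<noteq> {})"

definition outcomes :: "'e set \<Rightarrow> 'p set \<Rightarrow> ('e \<Rightarrow> 'p \<Rightarrow> 'x set) \<Rightarrow> 'x set" where
  "outcomes Ent Sig Out = (\<Union>e\<in>Ent. \<Union>p\<in>Sig. Out e p)"

definition d_classical :: "'e set \<Rightarrow> 'p set \<Rightarrow> ('e \<Rightarrow> 'p \<Rightarrow> 'x set) \<Rightarrow> bool" where
  "d_classical Ent Sig Out \<longleftrightarrow> (\<forall>e\<in>Ent. \<forall>p\<in>Sig. \<exists>x. Out e p = {x})"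

definition eig :: "'e set \<Rightarrow> 'p set \<Rightarrow> ('e \<Rightarrow> 'p \<Rightarrow> 'x set) \<Rightarrow> 'x set \<Rightarrow> ('e \<times> 'p) set" where
  "eig Ent Sig Out A = {(e, p). e \<in> Ent \<and> p \<in> Sig \<and> Out e p \<subseteq> A}"

definition Y_eig :: "'e set \<Rightarrow> 'p set \<Rightarrow> ('e \<Rightarrow> 'p \<Rightarrow> 'x set) \<Rightarrow> ('e \<times> 'p) set set" where
  "Y_eig Ent Sig Out = {eig Ent Sig Out A | A. A \<subseteq> outcomes Ent Sig Out}"

definition orthog :: "('e \<Rightarrow> 'p \<Rightarrow> 'x set) \<Rightarrow> 'e \<times> 'p \<Rightarrow> 'e \<times> 'p \<Rightarrow> bool" where
  "orthog Out a b \<longleftrightarrow> Out (fst a) (snd a) \<inter> Out (fst b) (snd b) = {}"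

definition perp :: "'e set \<Rightarrow> 'p set \<Rightarrow> ('e \<Rightarrow> 'p \<Rightarrow> 'x set) \<Rightarrow> ('e \<times> 'p) set \<Rightarrow> ('e \<times> 'p) set" where
  "perp Ent Sig Out K = {a \<in> Ent \<times> Sig. \<forall>b\<in>K. orthog Out a b}"

definition Y_orth :: "'e set \<Rightarrow> 'p set \<Rightarrow> ('e \<Rightarrow> 'p \<Rightarrow> 'x set) \<Rightarrow> ('e \<times> 'p) set set" where
  "Y_orth Ent Sig Out = {K. K \<subseteq> Ent \<times> Sig \<and> K = perp Ent Sig Out (perp Ent Sig Out K)}"

end

theory Submission
  imports Defs
begin

lemma single_out:
  assumes "d_classical Ent Sig Out"
  obtains x where "\<And>e p. e \<in> Ent \<Longrightarrow> p \<in> Sig \<Longrightarrow> Out e p = {x e p}"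
  using assms unfolding d_classical_def by metis

lemma eig_char:
  assumes "d_classical Ent Sig Out"
  shows "eig Ent Sig Out A = {(e, p). e \<in> Ent \<and> p \<in> Sig \<and> the_elem (Out e p) \<in> A}"
proof -
  obtain x where x: "\<And>e p. e \<in> Ent \<Longrightarrow> p \<in> Sig \<Longrightarrow> Out e p = {x e p}"
    using single_out[OF assms] by blast
  show ?thesis unfolding eig_def using x by auto
qed

lemma perp_char:
  assumes "d_classical Ent Sig Out"
  shows "perp Ent Sig Out K = {(e, p). e \<in> Ent \<and> p \<in> Sig \<and>
     (\<forall>b\<in>K. the_elem (Out e p) \<notin> Out (fst b) (snd b))}"
proof -
  obtain x where x: "\<And>e p. e \<in> Ent \<Longrightarrow> p \<in> Sig \<Longrightarrow> Out e p = {x e p}"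
    using single_out[OF assms] by blast
  show ?thesis unfolding perp_def orthog_def using x by auto
qed

lemma perp_K:
  assumes "d_classical Ent Sig Out" "K \<subseteq> Ent \<times> Sig"
  shows "perp Ent Sig Out K = eig Ent Sig Out (outcomes Ent Sig Out - (\<lambda>(e,p). the_elem (Out e p)) ` K)"
proof -
  obtain x where x: "\<And>e p. e \<in> Ent \<Longrightarrow> p \<in> Sig \<Longrightarrow> Out e p = {x e p}"
    using single_out[OF assms(1)] by blast
  have img: "(\<lambda>(e,p). the_elem (Out e p)) ` K = (\<lambda>(e,p). x e p) ` K"
    using x assms(2) by (auto intro!: image_cong)
  have X: "x e p \<in> outcomes Ent Sig Out" if "e \<in> Ent" "p \<in> Sig" for e p
    unfolding outcomes_def using x that by blast
  have te: "the_elem (Out e p) = x e p" if "e \<in> Ent" "p \<in> Sig" for e p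
    using x that by simp
  have eqv: "(\<forall>b\<in>K. x e p \<notin> Out (fst b) (snd b)) \<longleftrightarrow> x e p \<notin> (\<lambda>(e,p). x e p) ` K" for e p
  proof -
    have "Out (fst b) (snd b) = {(\<lambda>(e,p). x e p) b}" if "b \<in> K" for b
      using x assms(2) that by (cases b) auto
    then show ?thesis by force
  qed
  show ?thesis unfolding perp_char[OF assms(1)] eig_char[OF assms(1)] img
  proof (intro set_eqI iffI)
    fix a assume "a \<in> {(e, p). e \<in> Ent \<and> p \<in> Sig \<and> (\<forall>b\<in>K. the_elem (Out e p) \<notin> Out (fst b) (snd b))}"
    then obtain e p where a: "a = (e,p)" "e \<in> Ent" "p \<in> Sig" "\<forall>b\<in>K. x e p \<notin> Out (fst b) (snd b)"
      using te by auto
    then show "a \<in> {(e, p). e \<in> Ent \<and> p \<in> Sig \<and> the_elem (Out e p) \<in> outcomes Ent Sig Out - (\<lambda>(e,p). x e p) ` K}"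
      using eqv[of e p] X te by simp
  next
    fix a assume "a \<in> {(e, p). e \<in> Ent \<and> p \<in> Sig \<and> the_elem (Out e p) \<in> outcomes Ent Sig Out - (\<lambda>(e,p). x e p) ` K}"
    then obtain e p where a: "a = (e,p)" "e \<in> Ent" "p \<in> Sig" "x e p \<notin> (\<lambda>(e,p). x e p) ` K"
      using te by auto
    then show "a \<in> {(e, p). e \<in> Ent \<and> p \<in> Sig \<and> (\<forall>b\<in>K. the_elem (Out e p) \<notin> Out (fst b) (snd b))}"
      using eqv[of e p] te by simp
  qed
qed

lemma perp_eig:
  assumes "d_classical Ent Sig Out"
  shows "perp Ent Sig Out (eig Ent Sig Out A) = eig Ent Sig Out (outcomes Ent Sig Out - A)"
proof -
  obtain x where x: "\<And>e p. e \<in> Ent \<Longrightarrow> p \<in> Sig \<Longrightarrow> Out e p = {x e p}"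
    using single_out[OF assms(1)] by blast
  have sub: "eig Ent Sig Out A \<subseteq> Ent \<times> Sig" unfolding eig_def by auto
  have img: "outcomes Ent Sig Out - (\<lambda>(e,p). the_elem (Out e p)) ` eig Ent Sig Out A = outcomes Ent Sig Out - A"
  proof (intro set_eqI iffI)
    fix y assume y: "y \<in> outcomes Ent Sig Out - (\<lambda>(e,p). the_elem (Out e p)) ` eig Ent Sig Out A"
    then obtain e p where ep: "e \<in> Ent" "p \<in> Sig" "y \<in> Out e p" unfolding outcomes_def by blast
    then have "y = x e p" using x by auto
    moreover have te: "the_elem (Out e p) = x e p" using x ep by simp
    ultimately have "y \<notin> A"
    proof (intro notI)
      assume "y = x e p" "y \<in> A"
      then have "(e,p) \<in> eig Ent Sig Out A" unfolding eig_char[OF assms] using ep te by simp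
      then have "y \<in> (\<lambda>(e,p). the_elem (Out e p)) ` eig Ent Sig Out A"
        using te \<open>y = x e p\<close> by force
      then show False using y by blast
    qed
    then show "y \<in> outcomes Ent Sig Out - A" using y by blast
  next
    fix y assume y: "y \<in> outcomes Ent Sig Out - A"
    then show "y \<in> outcomes Ent Sig Out - (\<lambda>(e,p). the_elem (Out e p)) ` eig Ent Sig Out A"
      unfolding eig_char[OF assms] by auto
  qed
  show ?thesis using perp_K[OF assms sub] img by simp
qed

theorem mainTheorem8:
  fixes Ent :: "'e set" and Sig :: "'p set" and Out :: "'e \<Rightarrow> 'p \<Rightarrow> 'x set"
  assumes "entity Ent Sig Out"
    and "d_classical Ent Sig Out"
  shows "(\<forall>A. A \<subseteq> outcomes Ent Sig Out \<longrightarrow>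
            eig Ent Sig Out A = {(e, p). e \<in> Ent \<and> p \<in> Sig \<and> the_elem (Out e p) \<in> A}
          \<and> eig Ent Sig Out (outcomes Ent Sig Out - A) = (Ent \<times> Sig) - eig Ent Sig Out A
          \<and> (Ent \<times> Sig) - eig Ent Sig Out A = perp Ent Sig Out (eig Ent Sig Out A))
         \<and> Y_eig Ent Sig Out = Y_orth Ent Sig Out"
proof -
  note d = assms(2)
  have comp: "eig Ent Sig Out (outcomes Ent Sig Out - A) = (Ent \<times> Sig) - eig Ent Sig Out A" for A
  proof -
    obtain x where x: "\<And>e p. e \<in> Ent \<Longrightarrow> p \<in> Sig \<Longrightarrow> Out e p = {x e p}"
      using single_out[OF d] by blast
    have X: "the_elem (Out e p) \<in> outcomes Ent Sig Out" if "e \<in> Ent" "p \<in> Sig" for e p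
      unfolding outcomes_def using x that by auto
    show ?thesis unfolding eig_char[OF d] using X by auto
  qed
  have sub: "eig Ent Sig Out A \<subseteq> Ent \<times> Sig" for A unfolding eig_def by auto
  have "Y_eig Ent Sig Out \<subseteq> Y_orth Ent Sig Out"
  proof
    fix K assume "K \<in> Y_eig Ent Sig Out"
    then obtain A where A: "A \<subseteq> outcomes Ent Sig Out" "K = eig Ent Sig Out A"
      unfolding Y_eig_def by auto
    have "perp Ent Sig Out (perp Ent Sig Out K) = eig Ent Sig Out (outcomes Ent Sig Out - (outcomes Ent Sig Out - A))"
      using A perp_eig[OF d] by simp
    also have "\<dots> = K" using A by (simp add: Diff_Diff_Int inf_absorb2)
    finally show "K \<in> Y_orth Ent Sig Out" unfolding Y_orth_def using A sub by auto
  qed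
  moreover have "Y_orth Ent Sig Out \<subseteq> Y_eig Ent Sig Out"
  proof
    fix K assume "K \<in> Y_orth Ent Sig Out"
    hence K: "K \<subseteq> Ent \<times> Sig" "K = perp Ent Sig Out (perp Ent Sig Out K)" unfolding Y_orth_def by auto
    define B where "B = outcomes Ent Sig Out - (\<lambda>(e,p). the_elem (Out e p)) ` K"
    have "K = eig Ent Sig Out (outcomes Ent Sig Out - B)"
      using K perp_K[OF d K(1)] perp_eig[OF d] B_def by metis
    then show "K \<in> Y_eig Ent Sig Out" unfolding Y_eig_def by blast
  qed
  ultimately show ?thesis using eig_char[OF d] comp perp_eig[OF d] by auto
qed

end
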